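(* Algorithm 1 picks at most $(\alpha+\varepsilon)\cdot\widetilde{\mathrm{opt}}$ sets in $\mathrm{SOL}$.
   Context: Algorithm 1. Input: a stream of sets $S_1,\dots,S_m\subseteq[n]$, an integer $\alpha\ge1$, a parameter $\varepsilon>0$, and a number $\widetilde{\mathrm{opt}}$ with $\mathrm{opt}\le\widetilde{\mathrm{opt}}\le(1+\varepsilon)\mathrm{opt}$, where $\mathrm{opt}$ is the minimum number of input sets covering $[n]$. (1) Set $U\leftarrow[n]$, $\mathrm{SOL}\leftarrow\emptyset$. (2) In one pass, for each $S_i$ with $|S_i\cap U|\ge n/(\varepsilon\,\widetilde{\mathrm{opt}})$: add $i$ to $\mathrm{SOL}$ and set $U\leftarrow U\setminus S_i$. (3) For $j=1,\dots,\alpha$: (a) let $U_{\mathrm{smpl}}\subseteq U$ contain each element of $U$ independently with probability $p=16\,\widetilde{\mathrm{opt}}\log m/n^{1-1/\alpha}$; (b) in one pass, store $S'_i=S_i\cap U_{\mathrm{smpl}}$ for all $i\in[m]$; (c) compute an optimal (minimum-size) set cover $\mathrm{OPT}'$ of the instance $(S'_1,\dots,S'_m)$ on universe $U_{\mathrm{smpl}}$ and add its indices to $\mathrm{SOL}$; (d) in another pass, set $U\leftarrow U\setminus\bigcup_{i\in\mathrm{OPT}'}S_i$. (4) Return $\mathrm{SOL}$. *)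

theory Defs
  imports Complex_Main
begin

definition is_cover :: "(nat \<Rightarrow> nat set) \<Rightarrow> nat \<Rightarrow> nat set \<Rightarrow> nat set \<Rightarrow> bool" where
  "is_cover S m V I \<longleftrightarrow> I \<subseteq> {1..m} \<and> V \<subseteq> (\<Union>i\<in>I. S i)"

definition opt :: "(nat \<Rightarrow> nat set) \<Rightarrow> nat \<Rightarrow> nat set \<Rightarrow> nat" where
  "opt S m V = Min {card I | I. is_cover S m V I}"

definition is_min_cover :: "(nat \<Rightarrow> nat set) \<Rightarrow> nat \<Rightarrow> nat set \<Rightarrow> nat set \<Rightarrow> bool" where
  "is_min_cover S m V I \<longleftrightarrow> is_cover S m V I \<and> (\<forall>J. is_cover S m V J \<longrightarrow> card I \<le> card J)"

text \<open>Step (2): one pass over S 1, ..., S i in order, with threshold t.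
  The state is (U, SOL).\<close>
fun first_pass :: "(nat \<Rightarrow> nat set) \<Rightarrow> real \<Rightarrow> nat \<Rightarrow> nat set \<times> nat set \<Rightarrow> nat set \<times> nat set" where
  "first_pass S t 0 st = st"
| "first_pass S t (Suc i) st =
     (let (U, Sol) = first_pass S t i st in
      if real (card (S (Suc i) \<inter> U)) \<ge> t then (U - S (Suc i), insert (Suc i) Sol) else (U, Sol))"

end

theory Submission
  imports Defs
begin

lemma fp:
  assumes "finite U0" "t \<ge> 0" "finite Sol0"
  shows "first_pass S t i (U0, Sol0) = (U, Sol) \<Longrightarrow> U \<subseteq> U0 \<and> finite Sol \<and> Sol \<subseteq> Sol0 \<union> {1..i}
     \<and> real (card Sol) * t + real (card U) \<le> real (card Sol0) * t + real (card U0)"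
proof (induction i arbitrary: U Sol)
  case 0
  then show ?case using assms by simp
next
  case (Suc i)
  obtain U' Sol' where e: "first_pass S t i (U0, Sol0) = (U', Sol')" by (metis surj_pair)
  note IH = Suc.IH[OF e]
  have fU': "finite U'" using IH assms(1) finite_subset by blast
  show ?case
  proof (cases "real (card (S (Suc i) \<inter> U')) \<ge> t")
    case True
    then have UU: "U = U' - S (Suc i)" "Sol = insert (Suc i) Sol'" using Suc.prems e by auto
    have c1: "card (insert (Suc i) Sol') \<le> card Sol' + 1" by (simp add: card_insert_le_m1)
    have "card (U' - S (Suc i)) = card U' - card (U' \<inter> S (Suc i))" using fU' by (simp add: card_Diff_subset_Int)
    moreover have "card (U' \<inter> S (Suc i)) \<le> card U'" using fU' by (simp add: card_mono)
    ultimately have c2: "real (card (U' - S (Suc i))) = real (card U') - real (card (S (Suc i) \<inter> U'))"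
      by (simp add: Int_commute)
    have "real (card Sol) * t \<le> (real (card Sol') + 1) * t"
      using c1 UU assms(2) by (intro mult_right_mono) (auto simp: card_insert_if)
    then show ?thesis using IH UU c2 True by (auto simp: algebra_simps)
  next
    case False
    then have "U = U'" "Sol = Sol'" using Suc.prems e by auto
    then show ?thesis using IH by auto
  qed
qed

theorem lemma3p7:
  fixes S :: "nat \<Rightarrow> nat set" and m n \<alpha> :: nat and \<epsilon> opt_est :: real
    and Us Sols R OPTs :: "nat \<Rightarrow> nat set"
  assumes n_pos: "n \<ge> 1"
    and sets_sub: "\<forall>i\<in>{1..m}. S i \<subseteq> {1..n}"
    and feasible: "(\<Union>i\<in>{1..m}. S i) = {1..n}"
    and alpha: "\<alpha> \<ge> 1"
    and eps: "\<epsilon> > 0"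
    and est: "real (opt S m {1..n}) \<le> opt_est" "opt_est \<le> (1 + \<epsilon>) * real (opt S m {1..n})"
    and init: "(Us 0, Sols 0) = first_pass S (real n / (\<epsilon> * opt_est)) m ({1..n}, {})"
    and rounds: "\<forall>j<\<alpha>.
         R j \<subseteq> Us j
       \<and> is_min_cover (\<lambda>i. S i \<inter> R j) m (R j) (OPTs j)
       \<and> Sols (Suc j) = Sols j \<union> OPTs j
       \<and> Us (Suc j) = Us j - (\<Union>i\<in>OPTs j. S i)"
  shows "real (card (Sols \<alpha>)) \<le> (real \<alpha> + \<epsilon>) * opt_est"
proof -
  define C where "C = {card I | I. is_cover S m {1..n} I}"
  have covA: "is_cover S m {1..n} {1..m}" using feasible by (simp add: is_cover_def)
  have finC: "finite C"
  proof -
    have "C \<subseteq> {..m}"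
    proof
      fix c assume "c \<in> C"
      then obtain J where "c = card J" "J \<subseteq> {1..m}" by (auto simp: C_def is_cover_def)
      then have "c \<le> card {1..m}" by (metis card_mono finite_atLeastAtMost)
      then show "c \<in> {..m}" by simp
    qed
    then show ?thesis using finite_subset by blast
  qed
  have optC: "opt S m {1..n} \<in> C" unfolding opt_def C_def[symmetric]
    using finC covA by (intro Min_in) (auto simp: C_def)
  then obtain I where I: "is_cover S m {1..n} I" "card I = opt S m {1..n}" by (auto simp: C_def)
  have "I \<noteq> {}" using I(1) n_pos by (auto simp: is_cover_def)
  moreover have "finite I" using I(1) finite_subset by (auto simp: is_cover_def)
  ultimately have "card I \<ge> 1" by (simp add: Suc_leI card_gt_0_iff)
  hence opt1: "opt_est \<ge> 1" using I(2) est(1) by simp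
  have tpos: "real n / (\<epsilon> * opt_est) \<ge> 0" using eps opt1 by simp
  have F: "Us 0 \<subseteq> {1..n} \<and> finite (Sols 0) \<and> Sols 0 \<subseteq> {} \<union> {1..m}
     \<and> real (card (Sols 0)) * (real n / (\<epsilon> * opt_est)) + real (card (Us 0)) \<le> real (card ({}::nat set)) * (real n / (\<epsilon> * opt_est)) + real (card {1..n})"
    by (rule fp[OF _ tpos, of "{1..n}" "{}" S m]) (use init in auto)
  have s0: "real (card (Sols 0)) \<le> \<epsilon> * opt_est"
  proof -
    have "real (card (Sols 0)) * (real n / (\<epsilon> * opt_est)) \<le> real n" using F by (simp only: card.empty of_nat_0 mult_zero_left add_0_left card_atLeastAtMost) simp
    hence "real (card (Sols 0)) * real n \<le> real n * (\<epsilon> * opt_est)"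
      using eps opt1 by (simp add: field_simps)
    thus ?thesis using n_pos by (simp add: mult.commute)
  qed
  have round: "j < \<alpha> \<Longrightarrow> Us j \<subseteq> {1..n} \<and> finite (Sols j) \<and> real (card (Sols j)) \<le> \<epsilon> * opt_est + real j * opt_est" for j
  proof (induction j)
    case 0 then show ?case using F s0 by simp
  next
    case (Suc j)
    then have IH: "Us j \<subseteq> {1..n}" "finite (Sols j)" "real (card (Sols j)) \<le> \<epsilon> * opt_est + real j * opt_est" by auto
    have r: "R j \<subseteq> Us j" "is_min_cover (\<lambda>i. S i \<inter> R j) m (R j) (OPTs j)"
      "Sols (Suc j) = Sols j \<union> OPTs j" "Us (Suc j) = Us j - (\<Union>i\<in>OPTs j. S i)"
      using rounds Suc.prems by auto
    have "is_cover (\<lambda>i. S i \<inter> R j) m (R j) I" using I(1) r(1) IH(1) by (auto simp: is_cover_def)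
    hence cO: "card (OPTs j) \<le> opt S m {1..n}" using r(2) I(2) by (auto simp: is_min_cover_def)
    have fO: "finite (OPTs j)" using r(2) finite_subset by (auto simp: is_min_cover_def is_cover_def)
    have "card (Sols (Suc j)) \<le> card (Sols j) + card (OPTs j)" using r(3) by (simp add: card_Un_le)
    hence "real (card (Sols (Suc j))) \<le> real (card (Sols j)) + real (opt S m {1..n})" using cO by linarith
    have "real (card (Sols (Suc j))) \<le> \<epsilon> * opt_est + real (Suc j) * opt_est"
      using IH(3) est(1) `real (card (Sols (Suc j))) \<le> real (card (Sols j)) + real (opt S m {1..n})`
      by (simp add: distrib_right)
    moreover have "Us (Suc j) \<subseteq> {1..n}" using r(4) IH(1) by blast
    moreover have "finite (Sols (Suc j))" using r(3) IH(2) fO by simp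
    ultimately show ?case by blast
  qed
  obtain k where k: "\<alpha> = Suc k" using alpha by (cases \<alpha>) auto
  have A: "Us k \<subseteq> {1..n}" "finite (Sols k)" "real (card (Sols k)) \<le> \<epsilon> * opt_est + real k * opt_est"
    using round[of k] k by auto
  have r: "R k \<subseteq> Us k" "is_min_cover (\<lambda>i. S i \<inter> R k) m (R k) (OPTs k)" "Sols (Suc k) = Sols k \<union> OPTs k"
    using rounds k by auto
  have "is_cover (\<lambda>i. S i \<inter> R k) m (R k) I" using I(1) r(1) A(1) by (auto simp: is_cover_def)
  hence cO: "card (OPTs k) \<le> opt S m {1..n}" using r(2) I(2) by (auto simp: is_min_cover_def)
  have "card (Sols (Suc k)) \<le> card (Sols k) + card (OPTs k)" using r(3) by (simp add: card_Un_le)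
  hence "real (card (Sols \<alpha>)) \<le> real (card (Sols k)) + real (opt S m {1..n})" using cO unfolding k by linarith
  thus ?thesis using A(3) est(1) k by (simp add: distrib_right)
qed

end
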